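(* Let $\Omega\subset\mathbb{R}^n$ be a bounded Lipschitz domain, $T>0$, $\Omega_T=(0,T]\times\Omega$, $W$ a Hilbert space of measurable functions on $\Omega_T$ continuously embedded in $L^2(0,T;L^2(\Omega))$, $y_0\in L^2(\Omega)$, and $S:L^2(0,T;\mathbb{R}^2)\to W$ a continuous affine map with $\|S(u)\|_W\le C(\|u\|_{L^2(0,T;\mathbb{R}^2)}+\|y_0\|_{L^2(\Omega)})$ for a constant $C$ independent of $u,y_0$; let $S_0$ be its linear part (the map $S$ with $y_0=0$) and $\|S_0\|$ its operator norm from $L^2(0,T;\mathbb{R}^2)$ to $L^2(0,T;L^2(\omega_{\mathrm{obs}}))$, where $\omega_{\mathrm{obs}}\subset\Omega$. Let $y^d\in L^2(0,T;L^2(\omega_{\mathrm{obs}}))$, $\alpha>0$, $\varepsilon>0$, $\mathcal{U}=H^1(0,T;\mathbb{R}^2)$, and $\beta>\|S_0\|^2+\alpha+\pi^2$. Let $\bar u\in\mathcal{U}$ be a local minimizer over $\mathcal{U}$ of $$J_\beta(u)=\frac12\|Su-y^d\|^2_{L^2(0,T;L^2(\omega_{\mathrm{obs}}))}+\frac\alpha2\|u\|^2_{L^2(0,T;\mathbb{R}^2)}+\frac\varepsilon2\|u_t\|^2_{L^2(0,T;\mathbb{R}^2)}+\beta\int_0^T|u_1(t)u_2(t)|\,dt.$$ Then $\bar u_1(t)\bar u_2(t)=0$ for all $t\in[0,T]$ apart from intervals of length at most $\sqrt\varepsilon$; i.e. every interval contained in $\{t\in[0,T]:\bar u_1(t)\bar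 u_2(t)\neq0\}$ has length at most $\sqrt{\varepsilon}$.
   Context: $Su=S(u)$ is the state for control $u=(u_1,u_2)$, restricted to $(0,T)\times\omega_{\mathrm{obs}}$ in the tracking term. Elements of $H^1(0,T;\mathbb{R}^2)$ are identified with their continuous representatives. *)

theory Defs
  imports "HOL-Analysis.Analysis"
begin

text \<open>Controls u = (u1,u2) are functions real => real * real, considered on [0,T].
  The Euclidean norm of a pair is the product norm.\<close>

definition ctrl_L2 :: "real \<Rightarrow> (real \<Rightarrow> real \<times> real) \<Rightarrow> bool" where
  "ctrl_L2 T u \<longleftrightarrow> set_borel_measurable lborel {0..T} u \<and>
     set_integrable lborel {0..T} (\<lambda>t. (norm (u t))^2)"

definition ctrl_nsq :: "real \<Rightarrow> (real \<Rightarrow> real \<times> real) \<Rightarrow> real" where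
  "ctrl_nsq T u = (LINT t:{0..T}|lborel. (norm (u t))^2)"

definition weak_deriv :: "real \<Rightarrow> (real \<Rightarrow> real \<times> real) \<Rightarrow> (real \<Rightarrow> real \<times> real) \<Rightarrow> bool" where
  "weak_deriv T u g \<longleftrightarrow> ctrl_L2 T g \<and>
     (\<forall>t\<in>{0..T}. u t = u 0 + (LINT s:{0..t}|lborel. g s))"

text \<open>H^1(0,T;R^2), elements identified with their continuous representatives.\<close>
definition H1 :: "real \<Rightarrow> (real \<Rightarrow> real \<times> real) \<Rightarrow> bool" where
  "H1 T u \<longleftrightarrow> ctrl_L2 T u \<and> continuous_on {0..T} u \<and> (\<exists>g. weak_deriv T u g)"

definition dt :: "real \<Rightarrow> (real \<Rightarrow> real \<times> real) \<Rightarrow> (real \<Rightarrow> real \<times> real)" where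
  "dt T u = (SOME g. weak_deriv T u g)"

definition H1_nsq :: "real \<Rightarrow> (real \<Rightarrow> real \<times> real) \<Rightarrow> real" where
  "H1_nsq T u = ctrl_nsq T u + ctrl_nsq T (dt T u)"

definition obs_L2 :: "real \<Rightarrow> 'a::euclidean_space set \<Rightarrow> (real \<times> 'a \<Rightarrow> real) \<Rightarrow> bool" where
  "obs_L2 T \<omega> y \<longleftrightarrow> set_borel_measurable lborel ({0<..<T} \<times> \<omega>) y \<and>
     set_integrable lborel ({0<..<T} \<times> \<omega>) (\<lambda>z. (y z)^2)"

definition obs_nsq :: "real \<Rightarrow> 'a::euclidean_space set \<Rightarrow> (real \<times> 'a \<Rightarrow> real) \<Rightarrow> real" where
  "obs_nsq T \<omega> y = (LINT z:({0<..<T} \<times> \<omega>)|lborel. (y z)^2)"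

definition lin_part :: "((real \<Rightarrow> real \<times> real) \<Rightarrow> (real \<times> 'a \<Rightarrow> real)) \<Rightarrow>
     (real \<Rightarrow> real \<times> real) \<Rightarrow> (real \<times> 'a \<Rightarrow> real)" where
  "lin_part S u = (\<lambda>z. S u z - S (\<lambda>_. 0) z)"

definition op_norm :: "real \<Rightarrow> 'a::euclidean_space set \<Rightarrow>
     ((real \<Rightarrow> real \<times> real) \<Rightarrow> (real \<times> 'a \<Rightarrow> real)) \<Rightarrow> real" where
  "op_norm T \<omega> S0 = (SUP u\<in>{u. ctrl_L2 T u \<and> ctrl_nsq T u \<noteq> 0}.
      sqrt (obs_nsq T \<omega> (S0 u)) / sqrt (ctrl_nsq T u))"

definition J_beta :: "real \<Rightarrow> 'a::euclidean_space set \<Rightarrow>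
     ((real \<Rightarrow> real \<times> real) \<Rightarrow> (real \<times> 'a \<Rightarrow> real)) \<Rightarrow> (real \<times> 'a \<Rightarrow> real) \<Rightarrow>
     real \<Rightarrow> real \<Rightarrow> real \<Rightarrow> (real \<Rightarrow> real \<times> real) \<Rightarrow> real" where
  "J_beta T \<omega> S yd \<alpha> \<epsilon> \<beta> u =
     1/2 * obs_nsq T \<omega> (\<lambda>z. S u z - yd z)
     + \<alpha>/2 * ctrl_nsq T u
     + \<epsilon>/2 * ctrl_nsq T (dt T u)
     + \<beta> * (LINT t:{0..T}|lborel. \<bar>fst (u t) * snd (u t)\<bar>)"

end

theory Submission
  imports Defs
begin


lemma intind: "A \<in> sets M \<Longrightarrow> integrable M f \<Longrightarrow> integrable M (\<lambda>x. indicator A x * (f x::real))"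
  using integrable_mult_indicator[of A M f] by simp

lemma AE_zero_of_halflines:
  fixes f :: "real \<Rightarrow> real"
  assumes f: "integrable lborel f"
    and h: "\<And>t. (LINT x:{..t}|lborel. f x) = 0"
    and tot: "integral\<^sup>L lborel f = 0"
  shows "AE x in lborel. f x = 0"
proof -
  have fm[measurable]: "f \<in> borel_measurable lborel" using f by auto
  define fp where "fp = (\<lambda>x. ennreal (max 0 (f x)))"
  define fn where "fn = (\<lambda>x. ennreal (max 0 (- f x)))"
  have ip: "integrable lborel (\<lambda>x. max 0 (f x))" using f by auto
  have in': "integrable lborel (\<lambda>x. max 0 (- f x))" using f by auto
  have gt: "(LINT x:{t<..}|lborel. f x) = 0" for t
  proof -
    have "(LINT x:{t<..}|lborel. f x) = (LINT x|lborel. f x) - (LINT x:{..t}|lborel. f x)"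
    proof -
      have "(\<lambda>x. indicator {t<..} x *\<^sub>R f x) = (\<lambda>x. f x - indicator {..t} x *\<^sub>R f x)"
        by (auto simp: indicator_def fun_eq_iff)
      moreover have "integrable lborel (\<lambda>x. indicator {..t} x *\<^sub>R f x)"
        by (rule integrable_mult_indicator) (auto simp: f)
      ultimately show ?thesis unfolding set_lebesgue_integral_def
        using f by (simp add: Bochner_Integration.integral_diff del: scaleR_conv_of_real)
    qed
    then show ?thesis using h tot by simp
  qed
  have em: "emeasure (density lborel (\<lambda>x. ennreal (max 0 (g x)))) {t<..}
      = ennreal (LINT x:{t<..}|lborel. max 0 (g x))" if g: "integrable lborel g" for g :: "real \<Rightarrow> real" and t
  proof -
    have [measurable]: "g \<in> borel_measurable lborel" using g by auto
    have "emeasure (density lborel (\<lambda>x. ennreal (max 0 (g x)))) {t<..}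
        = (\<integral>\<^sup>+x. ennreal (max 0 (g x)) * indicator {t<..} x \<partial>lborel)"
      by (simp add: emeasure_density)
    also have "\<dots> = (\<integral>\<^sup>+x. ennreal (indicator {t<..} x * max 0 (g x)) \<partial>lborel)"
      by (intro nn_integral_cong) (auto simp: indicator_def)
    also have "\<dots> = ennreal (LINT x:{t<..}|lborel. max 0 (g x))"
      unfolding set_lebesgue_integral_def
      by (subst nn_integral_eq_integral) (auto intro!: intind g)
    finally show ?thesis .
  qed
  have eqd: "density lborel fp = density lborel fn"
  proof (rule measure_eqI_lessThan)
    show "sets (density lborel fp) = sets borel" "sets (density lborel fn) = sets borel" by auto
    fix t
    have "emeasure (density lborel fp) {t<..} = ennreal (LINT x:{t<..}|lborel. max 0 (f x))"
      unfolding fp_def using em[OF f] by simp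
    then show "emeasure (density lborel fp) {t<..} < \<infinity>" by simp
    have "(LINT x:{t<..}|lborel. max 0 (f x)) - (LINT x:{t<..}|lborel. max 0 (- f x))
        = (LINT x:{t<..}|lborel. f x)"
    proof -
      have "(\<lambda>x. indicator {t<..} x *\<^sub>R f x) = (\<lambda>x. indicator {t<..} x *\<^sub>R max 0 (f x) - indicator {t<..} x *\<^sub>R max 0 (- f x))"
        by (auto simp: indicator_def fun_eq_iff)
      moreover have "integrable lborel (\<lambda>x. indicator {t<..} x *\<^sub>R max 0 (f x))"
        by (rule integrable_mult_indicator) (auto simp: ip)
      moreover have "integrable lborel (\<lambda>x. indicator {t<..} x *\<^sub>R max 0 (- f x))"
        by (rule integrable_mult_indicator) (auto simp: in')
      ultimately show ?thesis unfolding set_lebesgue_integral_def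
        using Bochner_Integration.integral_diff[of lborel "\<lambda>x. indicator {t<..} x *\<^sub>R max 0 (f x)" "\<lambda>x. indicator {t<..} x *\<^sub>R max 0 (- f x)"]
        by (simp del: scaleR_conv_of_real)
    qed
    then have "(LINT x:{t<..}|lborel. max 0 (f x)) = (LINT x:{t<..}|lborel. max 0 (- f x))"
      using gt by simp
    moreover have "emeasure (density lborel fn) {t<..} = ennreal (LINT x:{t<..}|lborel. max 0 (- f x))"
      unfolding fn_def using em[of "\<lambda>x. - f x"] f by simp
    ultimately show "emeasure (density lborel fp) {t<..} = emeasure (density lborel fn) {t<..}"
      using \<open>emeasure (density lborel fp) {t<..} = _\<close> by simp
  qed
  have "AE x in lborel. fp x = fn x"
    by (rule sigma_finite_measure.density_unique[OF sigma_finite_lborel _ _ eqd]) (unfold fp_def fn_def, measurable)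
  moreover have "a = 0" if "ennreal (max 0 a) = ennreal (max 0 (- a))" for a :: real
  proof (cases "a \<ge> 0")
    case True then show ?thesis using that by (simp add: max_def split: if_splits)
  next
    case False then show ?thesis using that by (simp add: max_def)
  qed
  ultimately show ?thesis
    unfolding fp_def fn_def by (auto elim!: AE_mp)
qed


lemma L2_L1:
  assumes "ctrl_L2 T g" shows "set_integrable lborel {0..T} g"
proof -
  have m: "set_borel_measurable lborel {0..T} g" and n: "set_integrable lborel {0..T} (\<lambda>t. (norm (g t))^2)"
    using assms unfolding ctrl_L2_def by auto
  have c: "set_integrable lborel {0..T} (\<lambda>x. 1::real)"
    unfolding set_integrable_def using borel_integrable_compact[of "{0..T}" "\<lambda>x. 1::real"] by simp
  have s: "set_integrable lborel {0..T} (\<lambda>x. 1 + (norm (g x))^2)"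
    using set_integral_add(1)[OF c n] .
  have "norm (g x) \<le> norm (1 + (norm (g x))^2)" for x
  proof -
    have "0 \<le> (norm (g x) - 1)^2" by simp
    then have "2 * norm (g x) \<le> (norm (g x))^2 + 1"
      unfolding power2_diff by simp
    then have "norm (g x) \<le> 1 + (norm (g x))^2" using norm_ge_zero[of "g x"] by linarith
    then show ?thesis by simp
  qed
  then show ?thesis by (intro set_integrable_bound[OF s m]) auto
qed

lemma ctrl_L2_add:
  assumes u: "ctrl_L2 T u" and v: "ctrl_L2 T v"
  shows "ctrl_L2 T (\<lambda>t. u t + c *\<^sub>R v t)"
proof -
  have mu: "(\<lambda>x. indicator {0..T} x *\<^sub>R u x) \<in> borel_measurable lborel"
    and mv: "(\<lambda>x. indicator {0..T} x *\<^sub>R v x) \<in> borel_measurable lborel"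
    using u v unfolding ctrl_L2_def set_borel_measurable_def by auto
  have eq: "(\<lambda>x. indicator {0..T} x *\<^sub>R (u x + c *\<^sub>R v x)) =
      (\<lambda>x. indicator {0..T} x *\<^sub>R u x + c *\<^sub>R (indicator {0..T} x *\<^sub>R v x))"
    by (auto simp: fun_eq_iff algebra_simps)
  have m: "set_borel_measurable lborel {0..T} (\<lambda>t. u t + c *\<^sub>R v t)"
    unfolding set_borel_measurable_def eq using mu mv by measurable
  have nu: "set_integrable lborel {0..T} (\<lambda>t. (norm (u t))^2)"
    and nv: "set_integrable lborel {0..T} (\<lambda>t. (norm (v t))^2)"
    using u v unfolding ctrl_L2_def by auto
  have s: "set_integrable lborel {0..T} (\<lambda>t. 2 * (norm (u t))^2 + (2 * c^2) * (norm (v t))^2)"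
    using nu nv by (intro set_integral_add(1) set_integrable_mult_right) auto
  have m2: "set_borel_measurable lborel {0..T} (\<lambda>t. (norm (u t + c *\<^sub>R v t))^2)"
  proof -
    have e2: "(\<lambda>x. indicator {0..T} x *\<^sub>R (norm (u x + c *\<^sub>R v x))^2) =
        (\<lambda>x. (norm (indicator {0..T} x *\<^sub>R (u x + c *\<^sub>R v x)))^2)"
      by (auto simp: fun_eq_iff indicator_def)
    have m': "(\<lambda>x. indicator {0..T} x *\<^sub>R (u x + c *\<^sub>R v x)) \<in> borel_measurable lborel"
      using m unfolding set_borel_measurable_def .
    have "(\<lambda>x. (norm (indicator {0..T} x *\<^sub>R (u x + c *\<^sub>R v x)))^2) \<in> borel_measurable lborel"
      using m' by measurable
    then show ?thesis unfolding set_borel_measurable_def e2 .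
  qed
  have b: "(norm (a + c *\<^sub>R b))^2 \<le> 2 * (norm a)^2 + 2 * c^2 * (norm b)^2"
    for a b :: "real \<times> real"
  proof -
    have "norm (a + c *\<^sub>R b) \<le> norm a + \<bar>c\<bar> * norm b"
      using norm_triangle_ineq[of a "c *\<^sub>R b"] by simp
    then have "(norm (a + c *\<^sub>R b))^2 \<le> (norm a + \<bar>c\<bar> * norm b)^2"
      by (simp add: power_mono)
    also have "\<dots> \<le> 2 * (norm a)^2 + (2 * c^2) * (norm b)^2"
    proof -
      have "0 \<le> (norm a - \<bar>c\<bar> * norm b)^2" by simp
      then show ?thesis unfolding power2_diff power2_sum power_mult_distrib by simp
    qed
    finally show ?thesis by simp
  qed
  have "set_integrable lborel {0..T} (\<lambda>t. (norm (u t + c *\<^sub>R v t))^2)"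
    by (rule set_integrable_bound[OF s m2]) (auto intro!: AE_I2 b)
  then show ?thesis using m unfolding ctrl_L2_def by auto
qed

lemma weak_deriv_add:
  assumes u: "weak_deriv T u G" and h: "weak_deriv T h g"
  shows "weak_deriv T (\<lambda>t. u t + c *\<^sub>R h t) (\<lambda>t. G t + c *\<^sub>R g t)"
proof -
  have G: "ctrl_L2 T G" using u unfolding weak_deriv_def by blast
  have g: "ctrl_L2 T g" using h unfolding weak_deriv_def by blast
  have iG: "set_integrable lborel {0..T} G" and ig: "set_integrable lborel {0..T} g"
    using L2_L1 G g by auto
  have "u t + c *\<^sub>R h t = (u 0 + c *\<^sub>R h 0) + (LINT s:{0..t}|lborel. G s + c *\<^sub>R g s)"
    if t: "t \<in> {0..T}" for t
  proof -
    have iG': "set_integrable lborel {0..t} G"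
      by (rule set_integrable_subset[OF iG]) (use t in auto)
    have ig': "set_integrable lborel {0..t} g"
      by (rule set_integrable_subset[OF ig]) (use t in auto)
    have ig'': "set_integrable lborel {0..t} (\<lambda>s. c *\<^sub>R g s)"
      by (rule set_integrable_scaleR_right) (rule ig')
    have "(LINT s:{0..t}|lborel. G s + c *\<^sub>R g s) = (LINT s:{0..t}|lborel. G s) + (LINT s:{0..t}|lborel. c *\<^sub>R g s)"
      by (rule set_integral_add(2)[OF iG' ig''])
    also have "(LINT s:{0..t}|lborel. c *\<^sub>R g s) = c *\<^sub>R (LINT s:{0..t}|lborel. g s)"
      by (rule set_integral_scaleR_right)
    finally have "(LINT s:{0..t}|lborel. G s + c *\<^sub>R g s) = (LINT s:{0..t}|lborel. G s) + c *\<^sub>R (LINT s:{0..t}|lborel. g s)" .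
    moreover have "u t = u 0 + (LINT s:{0..t}|lborel. G s)" "h t = h 0 + (LINT s:{0..t}|lborel. g s)"
      using u h t unfolding weak_deriv_def by (blast, blast)
    ultimately show ?thesis by (simp add: algebra_simps)
  qed
  then show ?thesis unfolding weak_deriv_def using ctrl_L2_add[OF G g] by blast
qed

lemma comp_zero:
  fixes p :: "real \<times> real \<Rightarrow> real" and d :: "real \<Rightarrow> real \<times> real"
  assumes bl: "bounded_linear p" and T: "T \<ge> 0"
    and i: "set_integrable lborel {0..T} d"
    and z: "\<And>t. t \<in> {0..T} \<Longrightarrow> (LINT s:{0..t}|lborel. d s) = 0"
  shows "AE x in lborel. x \<in> {0..T} \<longrightarrow> p (d x) = 0"
proof -
  have lin: "linear p" using bl by (rule bounded_linear.linear)
  have key: "integral\<^sup>L lborel (\<lambda>x. indicator S x * p (d x)) = p (LINT x:S|lborel. d x)"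
    "integrable lborel (\<lambda>x. indicator S x * p (d x))"
    if "S \<in> sets lborel" "S \<subseteq> {0..T}" for S
  proof -
    have iS: "integrable lborel (\<lambda>x. indicator S x *\<^sub>R d x)"
      using set_integrable_subset[OF i that] unfolding set_integrable_def .
    have e: "(\<lambda>x. p (indicator S x *\<^sub>R d x)) = (\<lambda>x. indicator S x * p (d x))"
      using linear.scaleR[OF lin] by simp
    show "integral\<^sup>L lborel (\<lambda>x. indicator S x * p (d x)) = p (LINT x:S|lborel. d x)"
      using integral_bounded_linear[OF bl iS] unfolding e set_lebesgue_integral_def .
    show "integrable lborel (\<lambda>x. indicator S x * p (d x))"
      using integrable_bounded_linear[OF bl iS] unfolding e .
  qed
  define f where "f = (\<lambda>x. indicator {0..T} x * p (d x))"
  have fi: "integrable lborel f" unfolding f_def using key(2)[of "{0..T}"] by simp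
  have tot: "integral\<^sup>L lborel f = 0" unfolding f_def using key(1)[of "{0..T}"] z[of T] T
    by (simp add: linear_0[OF lin])
  have hl: "(LINT x:{..t}|lborel. f x) = 0" for t
  proof (cases "t < 0")
    case True
    then have "(\<lambda>x. indicator {..t} x *\<^sub>R f x) = (\<lambda>x. 0)"
      by (auto simp: f_def indicator_def fun_eq_iff)
    then show ?thesis unfolding set_lebesgue_integral_def by simp
  next
    case False
    then have "(\<lambda>x. indicator {..t} x *\<^sub>R f x) = (\<lambda>x. indicator {0..min T t} x * p (d x))"
      by (auto simp: f_def indicator_def fun_eq_iff)
    then show ?thesis unfolding set_lebesgue_integral_def
      using key(1)[of "{0..min T t}"] z[of "min T t"] False T by (simp add: linear_0[OF lin])
  qed
  have "AE x in lborel. f x = 0" by (rule AE_zero_of_halflines[OF fi hl tot])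
  then show ?thesis by eventually_elim (auto simp: f_def)
qed

lemma wd_unique:
  assumes T: "T \<ge> 0" and g1: "weak_deriv T u g1" and g2: "weak_deriv T u g2"
  shows "AE x in lborel. x \<in> {0..T} \<longrightarrow> g1 x = g2 x"
proof -
  have i1: "set_integrable lborel {0..T} g1" using g1 L2_L1 unfolding weak_deriv_def by blast
  have i2: "set_integrable lborel {0..T} g2" using g2 L2_L1 unfolding weak_deriv_def by blast
  have i: "set_integrable lborel {0..T} (\<lambda>x. g1 x - g2 x)" using set_integral_diff(1)[OF i1 i2] .
  have z: "(LINT s:{0..t}|lborel. g1 s - g2 s) = 0" if t: "t \<in> {0..T}" for t
  proof -
    have i1': "set_integrable lborel {0..t} g1"
      by (rule set_integrable_subset[OF i1]) (use t in auto)
    have i2': "set_integrable lborel {0..t} g2"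
      by (rule set_integrable_subset[OF i2]) (use t in auto)
    have "u t = u 0 + (LINT s:{0..t}|lborel. g1 s)" "u t = u 0 + (LINT s:{0..t}|lborel. g2 s)"
      using g1 g2 t unfolding weak_deriv_def by (blast, blast)
    then show ?thesis using set_integral_diff(2)[OF i1' i2'] by simp
  qed
  have a1: "AE x in lborel. x \<in> {0..T} \<longrightarrow> fst (g1 x - g2 x) = 0"
    by (rule comp_zero[OF bounded_linear_fst T i z])
  have a2: "AE x in lborel. x \<in> {0..T} \<longrightarrow> snd (g1 x - g2 x) = 0"
    by (rule comp_zero[OF bounded_linear_snd T i z])
  from a1 a2 show ?thesis by eventually_elim (auto simp: prod_eq_iff)
qed

lemma ctrl_nsq_AE:
  assumes "ctrl_L2 T g1" "ctrl_L2 T g2" "AE x in lborel. x \<in> {0..T} \<longrightarrow> g1 x = g2 x"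
  shows "ctrl_nsq T g1 = ctrl_nsq T g2"
proof -
  have m1: "(\<lambda>x. indicator {0..T} x *\<^sub>R (norm (g1 x))^2) \<in> borel_measurable lborel"
    and m2: "(\<lambda>x. indicator {0..T} x *\<^sub>R (norm (g2 x))^2) \<in> borel_measurable lborel"
    using assms(1,2) unfolding ctrl_L2_def set_integrable_def by auto
  show ?thesis unfolding ctrl_nsq_def set_lebesgue_integral_def
    by (rule integral_cong_AE[OF m1 m2]) (use assms(3) in \<open>eventually_elim, simp add: indicator_def\<close>)
qed

lemma ctrl_nsq_dt:
  assumes T: "T \<ge> 0" and g: "weak_deriv T u g"
  shows "ctrl_nsq T (dt T u) = ctrl_nsq T g"
proof -
  have d: "weak_deriv T u (dt T u)" unfolding dt_def using g by (rule someI[where P="weak_deriv T u"])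
  have c1: "ctrl_L2 T (dt T u)" using d unfolding weak_deriv_def by blast
  have c2: "ctrl_L2 T g" using g unfolding weak_deriv_def by blast
  show ?thesis by (rule ctrl_nsq_AE[OF c1 c2 wd_unique[OF T d g]])
qed


lemma ctrl_L2_cont:
  assumes "continuous_on {0..T} u" shows "ctrl_L2 T u"
proof -
  have i: "integrable lborel (\<lambda>x. indicator {0..T} x *\<^sub>R u x)"
    by (rule borel_integrable_compact) (auto intro: assms)
  have "continuous_on {0..T} (\<lambda>t. (norm (u t))^2)"
    by (intro continuous_intros assms)
  then have n: "integrable lborel (\<lambda>x. indicator {0..T} x *\<^sub>R (norm (u x))^2)"
    by (intro borel_integrable_compact) auto
  show ?thesis unfolding ctrl_L2_def set_borel_measurable_def set_integrable_def
    using i n by auto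
qed

lemma ctrl_nsq_nonneg: "ctrl_nsq T u \<ge> 0"
  unfolding ctrl_nsq_def set_lebesgue_integral_def
  by (rule Bochner_Integration.integral_nonneg) (auto simp: indicator_def)

lemma obs_nsq_nonneg: "obs_nsq T \<omega> y \<ge> 0"
  unfolding obs_nsq_def set_lebesgue_integral_def
  by (rule Bochner_Integration.integral_nonneg) (auto simp: indicator_def)

lemma ctrl_nsq_scale: "ctrl_nsq T (\<lambda>t. c *\<^sub>R u t) = c^2 * ctrl_nsq T u"
proof -
  have "(\<lambda>t. (norm (c *\<^sub>R u t))^2) = (\<lambda>t. c^2 * (norm (u t))^2)"
    by (auto simp: fun_eq_iff power_mult_distrib)
  then show ?thesis unfolding ctrl_nsq_def by simp
qed

lemma ctrl_nsq_par:
  assumes a: "ctrl_L2 T a" and b: "ctrl_L2 T b"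
  shows "ctrl_nsq T (\<lambda>t. a t + s *\<^sub>R b t) + ctrl_nsq T (\<lambda>t. a t + (-s) *\<^sub>R b t)
       = 2 * ctrl_nsq T a + 2 * s^2 * ctrl_nsq T b"
proof -
  have i1: "set_integrable lborel {0..T} (\<lambda>t. (norm (a t + s *\<^sub>R b t))^2)"
    using ctrl_L2_add[OF a b, of s] unfolding ctrl_L2_def by blast
  have i2: "set_integrable lborel {0..T} (\<lambda>t. (norm (a t + (-s) *\<^sub>R b t))^2)"
    using ctrl_L2_add[OF a b, of "-s"] unfolding ctrl_L2_def by blast
  have ia: "set_integrable lborel {0..T} (\<lambda>t. (norm (a t))^2)" using a unfolding ctrl_L2_def by blast
  have ib: "set_integrable lborel {0..T} (\<lambda>t. (norm (b t))^2)" using b unfolding ctrl_L2_def by blast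
  have ia2: "set_integrable lborel {0..T} (\<lambda>t. 2 * (norm (a t))^2)" by (rule set_integrable_mult_right) (rule ia)
  have ib2: "set_integrable lborel {0..T} (\<lambda>t. (2 * s^2) * (norm (b t))^2)" by (rule set_integrable_mult_right) (rule ib)
  have pw: "(norm (x + s *\<^sub>R y))^2 + (norm (x + (-s) *\<^sub>R y))^2 = 2 * (norm x)^2 + (2 * s^2) * (norm y)^2"
    for x y :: "real \<times> real"
    unfolding power2_norm_eq_inner by (simp add: inner_add_left inner_add_right algebra_simps power2_eq_square)
  have "ctrl_nsq T (\<lambda>t. a t + s *\<^sub>R b t) + ctrl_nsq T (\<lambda>t. a t + (-s) *\<^sub>R b t)
      = (LINT t:{0..T}|lborel. (norm (a t + s *\<^sub>R b t))^2 + (norm (a t + (-s) *\<^sub>R b t))^2)"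
    unfolding ctrl_nsq_def by (rule set_integral_add(2)[OF i1 i2, symmetric])
  also have "\<dots> = (LINT t:{0..T}|lborel. 2 * (norm (a t))^2 + (2 * s^2) * (norm (b t))^2)"
    unfolding pw ..
  also have "\<dots> = (LINT t:{0..T}|lborel. 2 * (norm (a t))^2) + (LINT t:{0..T}|lborel. (2 * s^2) * (norm (b t))^2)"
    by (rule set_integral_add(2)[OF ia2 ib2])
  also have "\<dots> = 2 * ctrl_nsq T a + 2 * s^2 * ctrl_nsq T b"
    unfolding ctrl_nsq_def by simp
  finally show ?thesis .
qed

lemma obs_sq_int:
  assumes y1: "obs_L2 T \<omega> y1" and y2: "obs_L2 T \<omega> y2"
  shows "integrable lborel (\<lambda>z. indicator ({0<..<T} \<times> \<omega>) z * (y1 z - y2 z)^2)"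
proof -
  let ?R = "{0<..<T} \<times> \<omega>"
  have m1: "(\<lambda>z. indicator ?R z *\<^sub>R y1 z) \<in> borel_measurable lborel"
    and m2: "(\<lambda>z. indicator ?R z *\<^sub>R y2 z) \<in> borel_measurable lborel"
    using y1 y2 unfolding obs_L2_def set_borel_measurable_def by blast+
  have i1: "integrable lborel (\<lambda>z. indicator ?R z *\<^sub>R (y1 z)^2)"
    and i2: "integrable lborel (\<lambda>z. indicator ?R z *\<^sub>R (y2 z)^2)"
    using y1 y2 unfolding obs_L2_def set_integrable_def by blast+
  have e: "(\<lambda>z. indicator ?R z * (y1 z - y2 z)^2) = (\<lambda>z. (indicator ?R z *\<^sub>R y1 z - indicator ?R z *\<^sub>R y2 z)^2)"
    by (auto simp: fun_eq_iff indicator_def)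
  have m: "(\<lambda>z. indicator ?R z * (y1 z - y2 z)^2) \<in> borel_measurable lborel"
    unfolding e using m1 m2 by measurable
  have s: "integrable lborel (\<lambda>z. 2 * (indicator ?R z *\<^sub>R (y1 z)^2) + 2 * (indicator ?R z *\<^sub>R (y2 z)^2))"
    using i1 i2 by auto
  have b: "(p - q)^2 \<le> 2 * p^2 + 2 * q^2" for p q :: real
  proof -
    have "0 \<le> (p + q)^2" by simp
    then show ?thesis unfolding power2_diff power2_sum by simp
  qed
  have pb: "norm (indicator ?R x * (y1 x - y2 x)^2) \<le>
          norm (2 * (indicator ?R x *\<^sub>R (y1 x)^2) + 2 * (indicator ?R x *\<^sub>R (y2 x)^2))" for x
    by (auto simp: indicator_def b)
  show ?thesis
    by (rule Bochner_Integration.integrable_bound[OF s m]) (intro AE_I2 pb)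
qed

lemma obs_nsq_diff_eq:
  "obs_nsq T \<omega> (\<lambda>z. y1 z - y2 z) = integral\<^sup>L lborel (\<lambda>z. indicator ({0<..<T} \<times> \<omega>) z * (y1 z - y2 z)^2)"
  by (simp add: obs_nsq_def set_lebesgue_integral_def)

lemma real_combo:
  fixes a b c p q y :: real
  assumes "a + b = 2 * c" "a - b = p - q"
  shows "(a - y)^2 + (b - y)^2 - 2 * (c - y)^2 = 1/2 * (p - q)^2"
proof -
  have c: "c = (a + b) / 2" using assms(1) by simp
  have pq: "p - q = a - b" using assms(2) by simp
  show ?thesis unfolding c pq by (simp add: power2_eq_square field_simps)
qed

lemma obs_combo:
  assumes A: "obs_L2 T \<omega> SA" and B: "obs_L2 T \<omega> SB" and C: "obs_L2 T \<omega> SC"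
    and P: "obs_L2 T \<omega> P" and Q: "obs_L2 T \<omega> Q" and Y: "obs_L2 T \<omega> yd"
    and AE1: "AE z in lborel. z \<in> {0<..<T} \<times> \<omega> \<longrightarrow> SA z + SB z = 2 * SC z"
    and AE2: "AE z in lborel. z \<in> {0<..<T} \<times> \<omega> \<longrightarrow> SA z - SB z = P z - Q z"
  shows "obs_nsq T \<omega> (\<lambda>z. SA z - yd z) + obs_nsq T \<omega> (\<lambda>z. SB z - yd z)
       - 2 * obs_nsq T \<omega> (\<lambda>z. SC z - yd z) = 1/2 * obs_nsq T \<omega> (\<lambda>z. P z - Q z)"
proof -
  let ?R = "{0<..<T} \<times> \<omega>"
  let ?I = "\<lambda>y1 y2 z. indicator ?R z * (y1 z - y2 z)^2"
  have iA: "integrable lborel (?I SA yd)" using obs_sq_int[OF A Y] .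
  have iB: "integrable lborel (?I SB yd)" using obs_sq_int[OF B Y] .
  have iC: "integrable lborel (?I SC yd)" using obs_sq_int[OF C Y] .
  have iP: "integrable lborel (?I P Q)" using obs_sq_int[OF P Q] .
  have iC2: "integrable lborel (\<lambda>z. 2 * ?I SC yd z)" using iC by (rule integrable_mult_right)
  have iP2: "integrable lborel (\<lambda>z. 1/2 * ?I P Q z)" using iP by (rule integrable_mult_right)
  have iAB: "integrable lborel (\<lambda>z. ?I SA yd z + ?I SB yd z)" using iA iB by (rule Bochner_Integration.integrable_add)
  have "obs_nsq T \<omega> (\<lambda>z. SA z - yd z) + obs_nsq T \<omega> (\<lambda>z. SB z - yd z)
       - 2 * obs_nsq T \<omega> (\<lambda>z. SC z - yd z)
     = integral\<^sup>L lborel (?I SA yd) + integral\<^sup>L lborel (?I SB yd) - integral\<^sup>L lborel (\<lambda>z. 2 * ?I SC yd z)"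
    unfolding obs_nsq_diff_eq by simp
  also have "\<dots> = integral\<^sup>L lborel (\<lambda>z. ?I SA yd z + ?I SB yd z - 2 * ?I SC yd z)"
    using Bochner_Integration.integral_add[OF iA iB] Bochner_Integration.integral_diff[OF iAB iC2]
    by simp
  also have "\<dots> = integral\<^sup>L lborel (\<lambda>z. 1/2 * ?I P Q z)"
  proof (rule integral_cong_AE)
    show "(\<lambda>z. ?I SA yd z + ?I SB yd z - 2 * ?I SC yd z) \<in> borel_measurable lborel"
      using Bochner_Integration.integrable_diff[OF iAB iC2] by (rule borel_measurable_integrable)
    show "(\<lambda>z. 1/2 * ?I P Q z) \<in> borel_measurable lborel"
      using iP2 by (rule borel_measurable_integrable)
    from AE1 AE2 show "AE z in lborel. ?I SA yd z + ?I SB yd z - 2 * ?I SC yd z = 1/2 * ?I P Q z"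
    proof eventually_elim
      case (elim z)
      show ?case
      proof (cases "z \<in> ?R")
        case True
        then have "SA z + SB z = 2 * SC z" "SA z - SB z = P z - Q z" using elim by auto
        from real_combo[OF this, of "yd z"] True show ?thesis by simp
      next
        case False then show ?thesis by simp
      qed
    qed
  qed
  also have "\<dots> = 1/2 * obs_nsq T \<omega> (\<lambda>z. P z - Q z)"
    unfolding obs_nsq_diff_eq by simp
  finally show ?thesis .
qed

lemma op_norm_bound:
  fixes S :: "(real \<Rightarrow> real \<times> real) \<Rightarrow> (real \<times> 'a::euclidean_space \<Rightarrow> real)"
  assumes Sb: "\<exists>C. \<forall>u. ctrl_L2 T u \<longrightarrow> obs_nsq T \<omega> (lin_part S u) \<le> C * ctrl_nsq T u"
    and w: "ctrl_L2 T w" "ctrl_nsq T w \<noteq> 0"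
  shows "obs_nsq T \<omega> (lin_part S w) \<le> (op_norm T \<omega> (lin_part S))^2 * ctrl_nsq T w"
proof -
  obtain C where C: "\<And>u. ctrl_L2 T u \<Longrightarrow> obs_nsq T \<omega> (lin_part S u) \<le> C * ctrl_nsq T u"
    using Sb by blast
  define X where "X = {u. ctrl_L2 T u \<and> ctrl_nsq T u \<noteq> 0}"
  define f where "f = (\<lambda>u. sqrt (obs_nsq T \<omega> (lin_part S u)) / sqrt (ctrl_nsq T u))"
  have fb: "f u \<le> sqrt \<bar>C\<bar>" if "u \<in> X" for u
  proof -
    have cp: "ctrl_nsq T u > 0" using that ctrl_nsq_nonneg[of T u] unfolding X_def by auto
    have "obs_nsq T \<omega> (lin_part S u) \<le> \<bar>C\<bar> * ctrl_nsq T u"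
    proof -
      have "C * ctrl_nsq T u \<le> \<bar>C\<bar> * ctrl_nsq T u"
        using cp by (intro mult_right_mono) auto
      moreover have "obs_nsq T \<omega> (lin_part S u) \<le> C * ctrl_nsq T u" using C[of u] that unfolding X_def by auto
      ultimately show ?thesis by linarith
    qed
    then have "obs_nsq T \<omega> (lin_part S u) / ctrl_nsq T u \<le> \<bar>C\<bar>"
      using cp by (simp add: divide_le_eq)
    then have "sqrt (obs_nsq T \<omega> (lin_part S u) / ctrl_nsq T u) \<le> sqrt \<bar>C\<bar>"
      by (rule real_sqrt_le_mono)
    then show ?thesis unfolding f_def by (simp add: real_sqrt_divide)
  qed
  have bdd: "bdd_above (f ` X)" using fb by (intro bdd_aboveI2) auto
  have wX: "w \<in> X" using w unfolding X_def by auto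
  have le: "f w \<le> op_norm T \<omega> (lin_part S)"
    unfolding op_norm_def using cSUP_upper[OF wX bdd] unfolding f_def X_def .
  have cp: "ctrl_nsq T w > 0" using w ctrl_nsq_nonneg[of T w] by auto
  have "sqrt (obs_nsq T \<omega> (lin_part S w)) \<le> op_norm T \<omega> (lin_part S) * sqrt (ctrl_nsq T w)"
    using le cp unfolding f_def by (simp add: divide_le_eq)
  then have "(sqrt (obs_nsq T \<omega> (lin_part S w)))^2 \<le> (op_norm T \<omega> (lin_part S) * sqrt (ctrl_nsq T w))^2"
    by (rule power_mono) (simp add: obs_nsq_nonneg)
  then show ?thesis using obs_nsq_nonneg[of T \<omega> "lin_part S w"] cp by (simp add: power_mult_distrib)
qed


lemma LINT_FTC:
  fixes F f :: "real \<Rightarrow> real"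
  assumes ab: "a \<le> b"
    and d: "\<And>x. a \<le> x \<Longrightarrow> x \<le> b \<Longrightarrow> (F has_real_derivative f x) (at x)"
    and c: "continuous_on {a..b} f"
  shows "(LINT x:{a..b}|lborel. f x) = F b - F a"
proof -
  have si: "set_integrable lborel {a..b} f"
    unfolding set_integrable_def by (rule borel_integrable_compact) (auto intro: c)
  have "(f has_integral (F b - F a)) {a..b}"
  proof (rule fundamental_theorem_of_calculus[OF ab])
    fix x assume "x \<in> {a..b}"
    then have "(F has_real_derivative f x) (at x)" using d by auto
    then show "(F has_vector_derivative f x) (at x within {a..b})"
      by (simp add: has_real_derivative_iff_has_vector_derivative has_vector_derivative_at_within)
  qed
  then show ?thesis using set_borel_integral_eq_integral(2)[OF si] by (simp add: integral_unique)
qed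

lemma set_int_cong_ind:
  fixes f g :: "real \<Rightarrow> real"
  assumes "\<And>t. indicator A t * f t = indicator B t * g t"
  shows "(LINT t:A|lborel. f t) = (LINT t:B|lborel. g t)"
  unfolding set_lebesgue_integral_def using assms by simp

definition phi :: "real \<Rightarrow> real \<Rightarrow> real \<Rightarrow> real" where
  "phi a L t = sin (pi * (max a (min (a + L) t) - a) / L)"

definition psi :: "real \<Rightarrow> real \<Rightarrow> real \<Rightarrow> real" where
  "psi a L t = indicator {a..a+L} t * (pi / L * cos (pi * (t - a) / L))"

lemma phi_cont: "L > 0 \<Longrightarrow> continuous_on UNIV (phi a L)"
  unfolding phi_def by (intro continuous_intros) auto

lemma phi_bound: "\<bar>phi a L t\<bar> \<le> 1"
  unfolding phi_def by simp

lemma phi_out: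
  assumes "L > 0" "t \<notin> {a..a+L}" shows "phi a L t = 0"
proof (cases "t < a")
  case True then show ?thesis unfolding phi_def by simp
next
  case False
  then have "t > a + L" using assms by auto
  then have "max a (min (a + L) t) - a = L" using assms by simp
  then show ?thesis unfolding phi_def using assms by simp
qed

lemma phi_in:
  assumes "t \<in> {a..a+L}" shows "phi a L t = sin (pi * (t - a) / L)"
  using assms unfolding phi_def by simp

lemma psi_integrable: "integrable lborel (psi a L)" if "L > 0"
proof -
  have "integrable lborel (\<lambda>t. indicator {a..a+L} t *\<^sub>R (pi / L * cos (pi * (t - a) / L)))"
    by (rule borel_integrable_compact) (use that in \<open>auto intro!: continuous_intros\<close>)
  then show ?thesis unfolding psi_def by simp
qed

lemma psi_sq_integrable: "integrable lborel (\<lambda>t. (psi a L t)^2)" if "L > 0"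
proof -
  have "integrable lborel (\<lambda>t. indicator {a..a+L} t *\<^sub>R (pi / L * cos (pi * (t - a) / L))^2)"
    by (rule borel_integrable_compact) (use that in \<open>auto intro!: continuous_intros\<close>)
  moreover have "(\<lambda>t. (psi a L t)^2) = (\<lambda>t. indicator {a..a+L} t *\<^sub>R (pi / L * cos (pi * (t - a) / L))^2)"
    unfolding psi_def by (auto simp: fun_eq_iff indicator_def)
  ultimately show ?thesis by simp
qed

lemma phi_FTC:
  assumes L: "L > 0" and a: "a \<ge> 0" and t: "t \<ge> 0"
  shows "phi a L t = phi a L 0 + (LINT s:{0..t}|lborel. psi a L s)"
proof -
  have p0: "phi a L 0 = 0" unfolding phi_def using a by simp
  show ?thesis
  proof (cases "t < a")
    case True
    have "(\<lambda>s. indicator {0..t} s *\<^sub>R psi a L s) = (\<lambda>s. 0)"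
      using True by (auto simp: psi_def indicator_def fun_eq_iff)
    then have "(LINT s:{0..t}|lborel. psi a L s) = 0"
      unfolding set_lebesgue_integral_def by simp
    moreover have "phi a L t = 0" unfolding phi_def using True by simp
    ultimately show ?thesis using p0 by simp
  next
    case False
    let ?m = "min t (a + L)"
    have "(LINT s:{0..t}|lborel. psi a L s) = (LINT s:{a..?m}|lborel. pi / L * cos (pi * (s - a) / L))"
      by (rule set_int_cong_ind) (use False a in \<open>auto simp: psi_def indicator_def\<close>)
    also have "\<dots> = sin (pi * (?m - a) / L) - sin (pi * (a - a) / L)"
    proof (rule LINT_FTC)
      show "a \<le> ?m" using False L by auto
      fix x show "((\<lambda>x. sin (pi * (x - a) / L)) has_real_derivative pi / L * cos (pi * (x - a) / L)) (at x)"
        using L by (auto intro!: derivative_eq_intros simp: field_simps)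
    qed (use L in \<open>auto intro!: continuous_intros\<close>)
    also have "\<dots> = phi a L t"
    proof -
      have "max a (min (a + L) t) = ?m" using False L by (simp add: min_def max_def)
      then show ?thesis unfolding phi_def by simp
    qed
    finally show ?thesis using p0 by simp
  qed
qed

lemma aux_sin: "L > 0 \<Longrightarrow> 1 / 2 - L / (4 * pi) * (cos (2 * th) * (2 * (pi / L))) = (sin th)^2"
  using cos_double_sin[of th] by (simp add: field_simps)

lemma aux_cos: "L > 0 \<Longrightarrow> 1 / 2 + L / (4 * pi) * (cos (2 * th) * (2 * (pi / L))) = (cos th)^2"
  using cos_double_cos[of th] by (simp add: field_simps)

lemma sin_sq_int:
  assumes L: "L > 0"
  shows "(LINT x:{a..a+L}|lborel. (sin (pi * (x - a) / L))^2) = L / 2"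
proof -
  have "(LINT x:{a..a+L}|lborel. (sin (pi * (x - a) / L))^2)
     = ((a + L - a) / 2 - L / (4 * pi) * sin (2 * (pi * (a + L - a) / L)))
       - ((a - a) / 2 - L / (4 * pi) * sin (2 * (pi * (a - a) / L)))"
  proof (rule LINT_FTC)
    fix x
    show "((\<lambda>x. (x - a) / 2 - L / (4 * pi) * sin (2 * (pi * (x - a) / L))) has_real_derivative
        (sin (pi * (x - a) / L))^2) (at x)"
    proof -
      have "((\<lambda>x. (x - a) / 2 - L / (4 * pi) * sin (2 * (pi * (x - a) / L))) has_real_derivative
        1 / 2 - L / (4 * pi) * (cos (2 * (pi * (x - a) / L)) * (2 * (pi / L)))) (at x)"
        by (auto intro!: derivative_eq_intros simp: field_simps)
      moreover have "1 / 2 - L / (4 * pi) * (cos (2 * (pi * (x - a) / L)) * (2 * (pi / L)))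
          = (sin (pi * (x - a) / L))^2"
        using aux_sin[OF L, of "pi * (x - a) / L"] by simp
      ultimately show ?thesis by simp
    qed
  qed (use L in \<open>auto intro!: continuous_intros\<close>)
  also have "\<dots> = L / 2" using L by simp
  finally show ?thesis .
qed

lemma cos_sq_int:
  assumes L: "L > 0"
  shows "(LINT x:{a..a+L}|lborel. (cos (pi * (x - a) / L))^2) = L / 2"
proof -
  have "(LINT x:{a..a+L}|lborel. (cos (pi * (x - a) / L))^2)
     = ((a + L - a) / 2 + L / (4 * pi) * sin (2 * (pi * (a + L - a) / L)))
       - ((a - a) / 2 + L / (4 * pi) * sin (2 * (pi * (a - a) / L)))"
  proof (rule LINT_FTC)
    fix x
    show "((\<lambda>x. (x - a) / 2 + L / (4 * pi) * sin (2 * (pi * (x - a) / L))) has_real_derivative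
        (cos (pi * (x - a) / L))^2) (at x)"
    proof -
      have "((\<lambda>x. (x - a) / 2 + L / (4 * pi) * sin (2 * (pi * (x - a) / L))) has_real_derivative
        1 / 2 + L / (4 * pi) * (cos (2 * (pi * (x - a) / L)) * (2 * (pi / L)))) (at x)"
        by (auto intro!: derivative_eq_intros simp: field_simps)
      moreover have "1 / 2 + L / (4 * pi) * (cos (2 * (pi * (x - a) / L)) * (2 * (pi / L)))
          = (cos (pi * (x - a) / L))^2"
        using aux_cos[OF L, of "pi * (x - a) / L"] by simp
      ultimately show ?thesis by simp
    qed
  qed (use L in \<open>auto intro!: continuous_intros\<close>)
  also have "\<dots> = L / 2" using L by simp
  finally show ?thesis .
qed


definition hh :: "real \<Rightarrow> real \<Rightarrow> real \<Rightarrow> real \<Rightarrow> real \<times> real" where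
  "hh a L \<sigma> t = phi a L t *\<^sub>R (1, - \<sigma>)"

definition gg :: "real \<Rightarrow> real \<Rightarrow> real \<Rightarrow> real \<Rightarrow> real \<times> real" where
  "gg a L \<sigma> t = psi a L t *\<^sub>R (1, - \<sigma>)"

lemma npair2: "(norm (c *\<^sub>R (1::real, - \<sigma>)))^2 = (1 + \<sigma>^2) * c^2"
proof -
  have "c *\<^sub>R (1::real, - \<sigma>) = (c, - (c * \<sigma>))" by simp
  then have "(norm (c *\<^sub>R (1::real, - \<sigma>)))^2 = c^2 + (c * \<sigma>)^2"
    by (simp add: norm_Pair)
  then show ?thesis by (simp add: power_mult_distrib algebra_simps)
qed

lemma npair3: "(norm (c, - (c * \<sigma>)))^2 = (1 + \<sigma>^2) * (c::real)^2"
  using npair2[of c \<sigma>] by simp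

lemma npair: fixes \<sigma> :: real shows "\<sigma>^2 = 1 \<Longrightarrow> (norm (c *\<^sub>R (1::real, - \<sigma>)))^2 = 2 * c^2"
  using npair2[of c \<sigma>] by simp

lemma hh_cont: "L > 0 \<Longrightarrow> continuous_on S (hh a L \<sigma>)"
  unfolding hh_def
  by (intro continuous_intros continuous_on_subset[OF phi_cont]) auto

lemma gg_L2:
  assumes L: "L > 0" shows "ctrl_L2 T (gg a L \<sigma>)"
proof -
  have pm: "psi a L \<in> borel_measurable lborel"
    using psi_integrable[OF L] by (rule borel_measurable_integrable)
  have m: "set_borel_measurable lborel {0..T} (gg a L \<sigma>)"
    unfolding set_borel_measurable_def gg_def using pm by measurable
  have "integrable lborel (\<lambda>t. (1 + \<sigma>^2) * (psi a L t)^2)"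
    using psi_sq_integrable[OF L] by (rule integrable_mult_right)
  then have "integrable lborel (\<lambda>t. indicator {0..T} t *\<^sub>R ((1 + \<sigma>^2) * (psi a L t)^2))"
    by (rule integrable_mult_indicator[rotated]) auto
  moreover have "(\<lambda>t. indicator {0..T} t *\<^sub>R ((1 + \<sigma>^2) * (psi a L t)^2))
      = (\<lambda>t. indicator {0..T} t *\<^sub>R (norm (gg a L \<sigma> t))^2)"
    by (simp add: fun_eq_iff gg_def npair3)
  ultimately show ?thesis using m unfolding ctrl_L2_def set_integrable_def by simp
qed

lemma hh_wd:
  assumes L: "L > 0" and a: "a \<ge> 0"
  shows "weak_deriv T (hh a L \<sigma>) (gg a L \<sigma>)"
proof -
  have "hh a L \<sigma> t = hh a L \<sigma> 0 + (LINT s:{0..t}|lborel. gg a L \<sigma> s)" if t: "t \<in> {0..T}" for t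
  proof -
    have "(LINT s:{0..t}|lborel. gg a L \<sigma> s) = (LINT s:{0..t}|lborel. psi a L s) *\<^sub>R (1, - \<sigma>)"
      unfolding gg_def by (rule set_integral_scaleR_left) (auto intro: psi_integrable[OF L])
    moreover have "phi a L t = phi a L 0 + (LINT s:{0..t}|lborel. psi a L s)"
      by (rule phi_FTC[OF L a]) (use t in auto)
    ultimately show ?thesis unfolding hh_def by (simp add: scaleR_add_left algebra_simps)
  qed
  then show ?thesis unfolding weak_deriv_def using gg_L2[OF L] by blast
qed

lemma hh_H1:
  assumes L: "L > 0" and a: "a \<ge> 0"
  shows "H1 T (hh a L \<sigma>)"
  unfolding H1_def using ctrl_L2_cont[OF hh_cont[OF L]] hh_cont[OF L] hh_wd[OF L a] by blast

lemma phi_sq_int: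
  assumes L: "L > 0" and a: "a \<ge> 0" and aL: "a + L \<le> T"
  shows "(LINT t:{0..T}|lborel. (phi a L t)^2) = L / 2"
proof -
  have "(LINT t:{0..T}|lborel. (phi a L t)^2) = (LINT t:{a..a+L}|lborel. (sin (pi * (t - a) / L))^2)"
  proof (rule set_int_cong_ind)
    fix t show "indicator {0..T} t * (phi a L t)^2 = indicator {a..a+L} t * (sin (pi * (t - a) / L))^2"
    proof (cases "t \<in> {a..a+L}")
      case True then show ?thesis using a aL phi_in[OF True] by (auto simp: indicator_def)
    next
      case False then show ?thesis using phi_out[OF L False] by (auto simp: indicator_def)
    qed
  qed
  then show ?thesis using sin_sq_int[OF L] by simp
qed

lemma hh_nsq:
  assumes L: "L > 0" and a: "a \<ge> 0" and aL: "a + L \<le> T" and s: "\<sigma>^2 = 1"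
  shows "ctrl_nsq T (hh a L \<sigma>) = L"
proof -
  have "ctrl_nsq T (hh a L \<sigma>) = (LINT t:{0..T}|lborel. 2 * (phi a L t)^2)"
    unfolding ctrl_nsq_def hh_def using npair[OF s] by simp
  also have "\<dots> = L" using phi_sq_int[OF L a aL] by simp
  finally show ?thesis .
qed

lemma gg_nsq:
  assumes L: "L > 0" and a: "a \<ge> 0" and aL: "a + L \<le> T" and s: "\<sigma>^2 = 1"
  shows "ctrl_nsq T (gg a L \<sigma>) = pi^2 / L"
proof -
  have "ctrl_nsq T (gg a L \<sigma>) = (LINT t:{0..T}|lborel. 2 * (psi a L t)^2)"
    unfolding ctrl_nsq_def gg_def using npair[OF s] by simp
  also have "\<dots> = (LINT t:{a..a+L}|lborel. (2 * (pi / L)^2) * (cos (pi * (t - a) / L))^2)"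
  proof (rule set_int_cong_ind)
    fix t show "indicator {0..T} t * (2 * (psi a L t)^2) = indicator {a..a+L} t * ((2 * (pi / L)^2) * (cos (pi * (t - a) / L))^2)"
      using a aL by (auto simp: indicator_def psi_def power_mult_distrib power_divide)
  qed
  also have "\<dots> = (2 * (pi / L)^2) * (LINT t:{a..a+L}|lborel. (cos (pi * (t - a) / L))^2)"
    by (rule set_integral_mult_right)
  also have "\<dots> = (2 * (pi / L)^2) * (L / 2)" unfolding cos_sq_int[OF L] ..
  also have "\<dots> = pi^2 / L" using L by (simp add: power2_eq_square)
  finally show ?thesis .
qed

lemma b1:
  fixes u1 u2 m K \<phi> s :: real
  assumes P: "u1 * u2 \<ge> m" and D: "\<bar>u2 - u1\<bar> \<le> K" and ph: "\<bar>\<phi>\<bar> \<le> 1"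
    and sm: "\<bar>s\<bar> * K + s^2 < m"
  shows "\<bar>(u1 + s * \<phi>) * (u2 - s * \<phi>)\<bar> + \<bar>(u1 - s * \<phi>) * (u2 + s * \<phi>)\<bar> = 2 * \<bar>u1 * u2\<bar> - 2 * s^2 * \<phi>^2"
proof -
  have K0: "K \<ge> 0" using D by linarith
  have "\<bar>s\<bar> * K \<ge> 0" using K0 by simp
  moreover have "s^2 \<ge> 0" by simp
  ultimately have m0: "m > 0" using sm by linarith
  have ph2: "\<phi>^2 \<le> 1" using power_mono[OF ph abs_ge_zero, of 2] by simp
  have X: "(u1 + c * \<phi>) * (u2 - c * \<phi>) > 0" if c: "\<bar>c\<bar> = \<bar>s\<bar>" for c
  proof -
    have e: "(u1 + c * \<phi>) * (u2 - c * \<phi>) = u1 * u2 + c * \<phi> * (u2 - u1) - c^2 * \<phi>^2"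
      by (simp add: algebra_simps power2_eq_square)
    have "\<bar>c * \<phi> * (u2 - u1)\<bar> = \<bar>c\<bar> * \<bar>\<phi>\<bar> * \<bar>u2 - u1\<bar>" by (simp add: abs_mult)
    also have "\<dots> \<le> \<bar>s\<bar> * 1 * K" unfolding c
      by (intro mult_mono ph D) auto
    finally have t1: "\<bar>c * \<phi> * (u2 - u1)\<bar> \<le> \<bar>s\<bar> * K" by simp
    have "c^2 = s^2" using c by (metis power2_abs)
    then have t2: "c^2 * \<phi>^2 \<le> s^2" using ph2 by (simp add: mult_left_le)
    show ?thesis unfolding e using t1 t2 P sm by linarith
  qed
  have X1: "(u1 + s * \<phi>) * (u2 - s * \<phi>) > 0" using X[of s] by simp
  have X2: "(u1 - s * \<phi>) * (u2 + s * \<phi>) > 0" using X[of "-s"] by simp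
  have "\<bar>u1 * u2\<bar> = u1 * u2" using P m0 by simp
  then show ?thesis using X1 X2 by (simp add: algebra_simps power2_eq_square)
qed

lemma b2:
  fixes u1 u2 m K \<phi> s \<sigma> :: real
  assumes sg: "\<sigma>^2 = 1" and P: "\<sigma> * (u1 * u2) \<ge> m" and D: "\<bar>u2 - \<sigma> * u1\<bar> \<le> K" and ph: "\<bar>\<phi>\<bar> \<le> 1"
    and sm: "\<bar>s\<bar> * K + s^2 < m"
  shows "\<bar>(u1 + s * \<phi>) * (u2 + s * (\<phi> * - \<sigma>))\<bar> + \<bar>(u1 + - s * \<phi>) * (u2 + - s * (\<phi> * - \<sigma>))\<bar>
     = 2 * \<bar>u1 * u2\<bar> - 2 * s^2 * \<phi>^2"
proof -
  from sg have "\<sigma> = 1 \<or> \<sigma> = -1" by (simp add: power2_eq_1_iff)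
  then show ?thesis
  proof
    assume "\<sigma> = 1" then show ?thesis using b1[of m u1 u2 K \<phi> s] P D ph sm by simp
  next
    assume s1: "\<sigma> = -1"
    have "\<bar>(u1 + s * \<phi>) * (- u2 - s * \<phi>)\<bar> + \<bar>(u1 - s * \<phi>) * (- u2 + s * \<phi>)\<bar> = 2 * \<bar>u1 * - u2\<bar> - 2 * s^2 * \<phi>^2"
      by (rule b1[of m u1 "- u2" K \<phi> s]) (use P D ph sm s1 in \<open>auto simp: algebra_simps\<close>)
    then show ?thesis using s1 by (simp add: algebra_simps abs_minus_commute)
  qed
qed


lemma beta_int:
  fixes u :: "real \<Rightarrow> real \<times> real"
  assumes L: "L > 0" and a: "a \<ge> 0" and aL: "a + L \<le> T" and sg: "\<sigma>^2 = 1"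
    and cu: "continuous_on {0..T} u"
    and pos: "\<And>t. t \<in> {a..a+L} \<Longrightarrow> \<sigma> * (fst (u t) * snd (u t)) \<ge> m"
    and Kb: "\<And>t. t \<in> {a..a+L} \<Longrightarrow> \<bar>snd (u t) - \<sigma> * fst (u t)\<bar> \<le> K"
    and sm: "\<bar>s\<bar> * K + s^2 < m"
  shows "(LINT t:{0..T}|lborel. \<bar>fst (u t + s *\<^sub>R hh a L \<sigma> t) * snd (u t + s *\<^sub>R hh a L \<sigma> t)\<bar>)
       + (LINT t:{0..T}|lborel. \<bar>fst (u t + (-s) *\<^sub>R hh a L \<sigma> t) * snd (u t + (-s) *\<^sub>R hh a L \<sigma> t)\<bar>)
       = 2 * (LINT t:{0..T}|lborel. \<bar>fst (u t) * snd (u t)\<bar>) - s^2 * L"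
proof -
  define F where "F = (\<lambda>c t. \<bar>fst (u t + c *\<^sub>R hh a L \<sigma> t) * snd (u t + c *\<^sub>R hh a L \<sigma> t)\<bar>)"
  have ch: "continuous_on {0..T} (hh a L \<sigma>)" by (rule hh_cont[OF L])
  have iF: "set_integrable lborel {0..T} (F c)" for c
    unfolding set_integrable_def F_def
    by (rule borel_integrable_compact) (auto intro!: continuous_intros cu ch)
  have iP: "set_integrable lborel {0..T} (\<lambda>t. 2 * \<bar>fst (u t) * snd (u t)\<bar>)"
    unfolding set_integrable_def
    by (rule borel_integrable_compact) (auto intro!: continuous_intros cu)
  have iphi: "set_integrable lborel {0..T} (\<lambda>t. (2 * s^2) * (phi a L t)^2)"
    unfolding set_integrable_def
    by (rule borel_integrable_compact) (auto intro!: continuous_intros continuous_on_subset[OF phi_cont[OF L]])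
  have pw: "F s t + F (-s) t = 2 * \<bar>fst (u t) * snd (u t)\<bar> - (2 * s^2) * (phi a L t)^2" for t
  proof (cases "t \<in> {a..a+L}")
    case True
    have "\<bar>(fst (u t) + s * phi a L t) * (snd (u t) + s * (phi a L t * - \<sigma>))\<bar>
        + \<bar>(fst (u t) + - s * phi a L t) * (snd (u t) + - s * (phi a L t * - \<sigma>))\<bar>
        = 2 * \<bar>fst (u t) * snd (u t)\<bar> - 2 * s^2 * (phi a L t)^2"
      by (rule b2[OF sg pos[OF True] Kb[OF True] phi_bound sm])
    moreover have "fst (hh a L \<sigma> t) = phi a L t" unfolding hh_def by simp
    moreover have "snd (hh a L \<sigma> t) = - (phi a L t * \<sigma>)" unfolding hh_def by simp
    ultimately show ?thesis unfolding F_def by simp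
  next
    case False
    then have "hh a L \<sigma> t = 0" unfolding hh_def using phi_out[OF L False] by (simp add: zero_prod_def)
    then show ?thesis unfolding F_def using phi_out[OF L False] by simp
  qed
  have "(LINT t:{0..T}|lborel. F s t) + (LINT t:{0..T}|lborel. F (-s) t)
      = (LINT t:{0..T}|lborel. F s t + F (-s) t)"
    by (rule set_integral_add(2)[OF iF iF, symmetric])
  also have "\<dots> = (LINT t:{0..T}|lborel. 2 * \<bar>fst (u t) * snd (u t)\<bar> - (2 * s^2) * (phi a L t)^2)"
    unfolding pw ..
  also have "\<dots> = (LINT t:{0..T}|lborel. 2 * \<bar>fst (u t) * snd (u t)\<bar>) - (LINT t:{0..T}|lborel. (2 * s^2) * (phi a L t)^2)"
    by (rule set_integral_diff(2)[OF iP iphi])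
  also have "\<dots> = 2 * (LINT t:{0..T}|lborel. \<bar>fst (u t) * snd (u t)\<bar>) - (2 * s^2) * (LINT t:{0..T}|lborel. (phi a L t)^2)"
    by simp
  also have "\<dots> = 2 * (LINT t:{0..T}|lborel. \<bar>fst (u t) * snd (u t)\<bar>) - s^2 * L"
    unfolding phi_sq_int[OF L a aL] by simp
  finally show ?thesis unfolding F_def .
qed


lemma sign_setup:
  fixes u :: "real \<Rightarrow> real \<times> real"
  assumes cu: "continuous_on {c..d} u" and cd: "c \<le> d"
    and nz: "\<And>t. t \<in> {c..d} \<Longrightarrow> fst (u t) * snd (u t) \<noteq> 0"
  shows "\<exists>\<sigma> m K. \<sigma>^2 = 1 \<and> m > 0 \<and> (\<forall>t\<in>{c..d}. \<sigma> * (fst (u t) * snd (u t)) \<ge> m)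
     \<and> (\<forall>t\<in>{c..d}. \<bar>snd (u t) - \<sigma> * fst (u t)\<bar> \<le> K)"
proof -
  define P where "P = (\<lambda>t. fst (u t) * snd (u t))"
  have cP: "continuous_on {c..d} P" unfolding P_def by (intro continuous_intros cu)
  define \<sigma> :: real where "\<sigma> = (if P c > 0 then 1 else -1)"
  have s2: "\<sigma>^2 = 1" unfolding \<sigma>_def by simp
  have Pc: "P c \<noteq> 0" using nz[of c] cd unfolding P_def by auto
  have sc: "\<sigma> * P c > 0" using Pc unfolding \<sigma>_def by auto
  have pos: "\<sigma> * P t > 0" if t: "t \<in> {c..d}" for t
  proof (rule ccontr)
    assume "\<not> \<sigma> * P t > 0"
    then have le: "- (\<sigma> * P t) \<ge> 0" by simp
    have "continuous_on {c..t} (\<lambda>x. - (\<sigma> * P x))"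
      by (intro continuous_intros continuous_on_subset[OF cP]) (use t in auto)
    then obtain x where x: "c \<le> x" "x \<le> t" "- (\<sigma> * P x) = 0"
      using IVT'[of "\<lambda>x. - (\<sigma> * P x)" c 0 t] sc le t by auto
    then have "P x = 0" using s2 by (auto simp: \<sigma>_def split: if_splits)
    moreover have "x \<in> {c..d}" using x t by auto
    ultimately show False using nz unfolding P_def by auto
  qed
  have ne: "{c..d} \<noteq> {}" using cd by auto
  have csP: "continuous_on {c..d} (\<lambda>t. \<sigma> * P t)" by (intro continuous_intros cP)
  obtain x0 where x0: "x0 \<in> {c..d}" "\<forall>y\<in>{c..d}. \<sigma> * P x0 \<le> \<sigma> * P y"
    using continuous_attains_inf[OF compact_Icc ne csP] by blast
  obtain x1 where x1: "x1 \<in> {c..d}" "\<forall>y\<in>{c..d}. \<bar>snd (u y) - \<sigma> * fst (u y)\<bar> \<le> \<bar>snd (u x1) - \<sigma> * fst (u x1)\<bar>"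
  proof -
    have "continuous_on {c..d} (\<lambda>t. \<bar>snd (u t) - \<sigma> * fst (u t)\<bar>)"
      by (intro continuous_intros cu)
    then show ?thesis using continuous_attains_sup[OF compact_Icc ne] that by blast
  qed
  show ?thesis
    apply (rule exI[of _ \<sigma>], rule exI[of _ "\<sigma> * P x0"], rule exI[of _ "\<bar>snd (u x1) - \<sigma> * fst (u x1)\<bar>"])
    using s2 pos[OF x0(1)] x0(2) x1(2) unfolding P_def by auto
qed

lemma small_s:
  fixes K m N r :: real
  assumes "m > 0" "r > 0"
  shows "\<exists>s>0. \<bar>s\<bar> * K + s^2 < m \<and> s^2 * N < r^2"
proof -
  have t1: "((\<lambda>s. \<bar>s\<bar> * K + s^2) \<longlongrightarrow> 0) (at_right (0::real))"
    by (auto intro!: tendsto_eq_intros)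
  have t2: "((\<lambda>s. s^2 * N) \<longlongrightarrow> 0) (at_right (0::real))"
    by (auto intro!: tendsto_eq_intros)
  have e1: "\<forall>\<^sub>F s in at_right 0. \<bar>s\<bar> * K + s^2 < m" using order_tendstoD(2)[OF t1] assms by auto
  have e2: "\<forall>\<^sub>F s in at_right 0. s^2 * N < r^2" using order_tendstoD(2)[OF t2] assms by auto
  have e3: "\<forall>\<^sub>F s in at_right (0::real). s > 0" by (simp add: eventually_at_right_less)
  have "\<exists>s. s > 0 \<and> \<bar>s\<bar> * K + s^2 < m \<and> s^2 * N < r^2"
    by (rule eventually_happens'[OF trivial_limit_at_right_real[THEN not_sym[THEN not_sym]]])
       (use e1 e2 e3 in \<open>auto elim: eventually_elim2 eventually_mono intro: eventually_conj\<close>)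
  then show ?thesis by auto
qed

theorem theorem3p2:
  fixes T \<alpha> \<epsilon> \<beta> :: real
    and \<Omega> \<omega> :: "'a::euclidean_space set"
    and S :: "(real \<Rightarrow> real \<times> real) \<Rightarrow> (real \<times> 'a \<Rightarrow> real)"
    and yd :: "real \<times> 'a \<Rightarrow> real"
    and ubar :: "real \<Rightarrow> real \<times> real"
  assumes T: "T > 0"
    and \<Omega>: "open \<Omega>" "connected \<Omega>" "bounded \<Omega>"
    and \<omega>: "\<omega> \<subseteq> \<Omega>" "\<omega> \<in> sets borel"
    and S_maps: "\<And>u. ctrl_L2 T u \<Longrightarrow> obs_L2 T \<omega> (S u)"
    and S_affine: "\<And>u v a. ctrl_L2 T u \<Longrightarrow> ctrl_L2 T v \<Longrightarrow>
          AE z in lborel. z \<in> {0<..<T} \<times> \<omega> \<longrightarrow>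
            S (\<lambda>t. a *\<^sub>R u t + (1 - a) *\<^sub>R v t) z = a * S u z + (1 - a) * S v z"
    and S_bounded: "\<exists>C. \<forall>u. ctrl_L2 T u \<longrightarrow>
          obs_nsq T \<omega> (lin_part S u) \<le> C * ctrl_nsq T u"
    and yd: "obs_L2 T \<omega> yd"
    and \<alpha>: "\<alpha> > 0" and \<epsilon>: "\<epsilon> > 0"
    and \<beta>: "\<beta> > (op_norm T \<omega> (lin_part S))^2 + \<alpha> + pi^2"
    and ubar_H1: "H1 T ubar"
    and ubar_locmin: "\<exists>r>0. \<forall>v. H1 T v \<and> H1_nsq T (\<lambda>t. v t - ubar t) < r^2 \<longrightarrow>
          J_beta T \<omega> S yd \<alpha> \<epsilon> \<beta> ubar \<le> J_beta T \<omega> S yd \<alpha> \<epsilon> \<beta> v"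
  shows "\<forall>a b. {a<..<b} \<subseteq> {t\<in>{0..T}. fst (ubar t) * snd (ubar t) \<noteq> 0} \<longrightarrow>
           b - a \<le> sqrt \<epsilon>"
proof (intro allI impI)
  fix a b
  assume sub: "{a<..<b} \<subseteq> {t\<in>{0..T}. fst (ubar t) * snd (ubar t) \<noteq> 0}"
  show "b - a \<le> sqrt \<epsilon>"
  proof (rule ccontr)
    assume "\<not> b - a \<le> sqrt \<epsilon>"
    then have ba: "b - a > sqrt \<epsilon>" by simp
    define L where "L = sqrt \<epsilon>"
    have L: "L > 0" unfolding L_def using \<epsilon> by simp
    have L2: "L^2 = \<epsilon>" unfolding L_def using \<epsilon> by simp
    define c where "c = (a + b) / 2 - L / 2"
    have ac: "a < c" unfolding c_def L_def using ba by (simp add: field_simps)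
    have cb: "c + L < b" unfolding c_def L_def using ba by (simp add: field_simps)
    have inab: "t \<in> {a<..<b}" if "t \<in> {c..c+L}" for t using that ac cb by auto
    have "c \<in> {a<..<b}" "c + L \<in> {a<..<b}" using inab L by auto
    then have "c \<in> {0..T}" "c + L \<in> {0..T}" using sub by blast+
    then have c0: "c \<ge> 0" and cT: "c + L \<le> T" by auto
    have cu: "continuous_on {0..T} ubar" using ubar_H1 unfolding H1_def by blast
    have uL2: "ctrl_L2 T ubar" using ubar_H1 unfolding H1_def by blast
    have nz: "fst (ubar t) * snd (ubar t) \<noteq> 0" if "t \<in> {c..c+L}" for t
      using sub inab[OF that] by auto
    obtain \<sigma> m K where sg: "\<sigma>^2 = 1" and m0: "m > 0"
      and pos: "\<forall>t\<in>{c..c+L}. \<sigma> * (fst (ubar t) * snd (ubar t)) \<ge> m"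
      and Kb: "\<forall>t\<in>{c..c+L}. \<bar>snd (ubar t) - \<sigma> * fst (ubar t)\<bar> \<le> K"
    proof -
      have cu': "continuous_on {c..c+L} ubar" by (rule continuous_on_subset[OF cu]) (use c0 cT in auto)
      have "c \<le> c + L" using L by simp
      from sign_setup[OF cu' this nz] show ?thesis using that by blast
    qed
    obtain r where r: "r > 0" and rmin: "\<And>v. H1 T v \<Longrightarrow> H1_nsq T (\<lambda>t. v t - ubar t) < r^2 \<Longrightarrow>
          J_beta T \<omega> S yd \<alpha> \<epsilon> \<beta> ubar \<le> J_beta T \<omega> S yd \<alpha> \<epsilon> \<beta> v"
      using ubar_locmin by blast
    obtain s where s0: "s > 0" and sm: "\<bar>s\<bar> * K + s^2 < m" and sr: "s^2 * (L + pi^2 / L) < r^2"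
      using small_s[OF m0 r, of K "L + pi^2 / L"] by blast
    define h where "h = hh c L \<sigma>"
    define g where "g = gg c L \<sigma>"
    define G where "G = dt T ubar"
    have hwd: "weak_deriv T h g" unfolding h_def g_def by (rule hh_wd[OF L c0])
    have hH1: "H1 T h" unfolding h_def by (rule hh_H1[OF L c0])
    have hL2: "ctrl_L2 T h" using hH1 unfolding H1_def by blast
    have gL2: "ctrl_L2 T g" using hwd unfolding weak_deriv_def by blast
    have hc: "continuous_on {0..T} h" using hH1 unfolding H1_def by blast
    have Gwd: "weak_deriv T ubar G"
    proof -
      have "\<exists>g. weak_deriv T ubar g" using ubar_H1 unfolding H1_def by blast
      then show ?thesis unfolding G_def dt_def by (rule someI_ex)
    qed
    have GL2: "ctrl_L2 T G" using Gwd unfolding weak_deriv_def by blast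
    have hn: "ctrl_nsq T h = L" unfolding h_def by (rule hh_nsq[OF L c0 cT sg])
    have gn: "ctrl_nsq T g = pi^2 / L" unfolding g_def by (rule gg_nsq[OF L c0 cT sg])
    have T0: "T \<ge> 0" using T by simp
    define vp where "vp = (\<lambda>t. ubar t + s *\<^sub>R h t)"
    define vm where "vm = (\<lambda>t. ubar t + (-s) *\<^sub>R h t)"
    have vwd: "weak_deriv T (\<lambda>t. ubar t + e *\<^sub>R h t) (\<lambda>t. G t + e *\<^sub>R g t)" for e
      by (rule weak_deriv_add[OF Gwd hwd])
    have vH1: "H1 T (\<lambda>t. ubar t + e *\<^sub>R h t)" for e
    proof -
      have "continuous_on {0..T} (\<lambda>t. ubar t + e *\<^sub>R h t)" by (intro continuous_intros cu hc)
      then show ?thesis unfolding H1_def using ctrl_L2_add[OF uL2 hL2, of e] vwd[of e] by blast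
    qed
    have vL2: "ctrl_L2 T (\<lambda>t. ubar t + e *\<^sub>R h t)" for e using ctrl_L2_add[OF uL2 hL2] .
    have zwd: "weak_deriv T (\<lambda>t. 0) (\<lambda>t. 0)"
      unfolding weak_deriv_def using ctrl_L2_cont[of T "\<lambda>t. (0::real\<times>real)"] by auto
    have zL2: "ctrl_L2 T (\<lambda>t. 0)" using ctrl_L2_cont[of T "\<lambda>t. (0::real\<times>real)"] by auto
    have ewd: "weak_deriv T (\<lambda>t. e *\<^sub>R h t) (\<lambda>t. e *\<^sub>R g t)" for e
      using weak_deriv_add[OF zwd hwd, of e] by simp
    have near: "H1_nsq T (\<lambda>t. (ubar t + e *\<^sub>R h t) - ubar t) < r^2" if e: "\<bar>e\<bar> = s" for e
    proof -
      have "H1_nsq T (\<lambda>t. (ubar t + e *\<^sub>R h t) - ubar t) = ctrl_nsq T (\<lambda>t. e *\<^sub>R h t) + ctrl_nsq T (\<lambda>t. e *\<^sub>R g t)"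
        unfolding H1_nsq_def using ctrl_nsq_dt[OF T0 ewd[of e]] by simp
      also have "\<dots> = e^2 * (L + pi^2 / L)" unfolding ctrl_nsq_scale hn gn by (simp add: algebra_simps)
      also have "\<dots> = s^2 * (L + pi^2 / L)" using e by (metis power2_abs)
      finally show ?thesis using sr by simp
    qed
    have Jp: "J_beta T \<omega> S yd \<alpha> \<epsilon> \<beta> ubar \<le> J_beta T \<omega> S yd \<alpha> \<epsilon> \<beta> vp"
      unfolding vp_def by (rule rmin[OF vH1 near]) (use s0 in simp)
    have Jm: "J_beta T \<omega> S yd \<alpha> \<epsilon> \<beta> ubar \<le> J_beta T \<omega> S yd \<alpha> \<epsilon> \<beta> vm"
      unfolding vm_def by (rule rmin[OF vH1 near]) (use s0 in simp)
    have Dp: "ctrl_nsq T (dt T vp) = ctrl_nsq T (\<lambda>t. G t + s *\<^sub>R g t)"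
      unfolding vp_def by (rule ctrl_nsq_dt[OF T0 vwd])
    have Dm: "ctrl_nsq T (dt T vm) = ctrl_nsq T (\<lambda>t. G t + (-s) *\<^sub>R g t)"
      unfolding vm_def by (rule ctrl_nsq_dt[OF T0 vwd])
    have Dsum: "ctrl_nsq T (dt T vp) + ctrl_nsq T (dt T vm) = 2 * ctrl_nsq T (dt T ubar) + 2 * s^2 * (pi^2 / L)"
      unfolding Dp Dm ctrl_nsq_par[OF GL2 gL2] G_def[symmetric] gn ..
    have Csum: "ctrl_nsq T vp + ctrl_nsq T vm = 2 * ctrl_nsq T ubar + 2 * s^2 * L"
      unfolding vp_def vm_def ctrl_nsq_par[OF uL2 hL2] hn ..
    have Bsum: "(LINT t:{0..T}|lborel. \<bar>fst (vp t) * snd (vp t)\<bar>) + (LINT t:{0..T}|lborel. \<bar>fst (vm t) * snd (vm t)\<bar>)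
        = 2 * (LINT t:{0..T}|lborel. \<bar>fst (ubar t) * snd (ubar t)\<bar>) - s^2 * L"
      unfolding vp_def vm_def h_def
      by (rule beta_int[OF L c0 cT sg cu]) (use pos Kb sm in auto)
    define w where "w = (\<lambda>t. (2 * s) *\<^sub>R h t)"
    have wL2: "ctrl_L2 T w" unfolding w_def using ctrl_L2_add[OF zL2 hL2, of "2 * s"] by simp
    have wn: "ctrl_nsq T w = 4 * s^2 * L" unfolding w_def ctrl_nsq_scale hn by (simp add: power_mult_distrib)
    have vpL2: "ctrl_L2 T vp" unfolding vp_def by (rule vL2)
    have vmL2: "ctrl_L2 T vm" unfolding vm_def by (rule vL2)
    have e1: "(\<lambda>t. (1/2) *\<^sub>R vp t + (1 - 1/2) *\<^sub>R vm t) = ubar"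
      unfolding vp_def vm_def by (simp add: fun_eq_iff prod_eq_iff algebra_simps)
    have e2: "(\<lambda>t. (1/2) *\<^sub>R vp t + (1 - 1/2) *\<^sub>R (0::real\<times>real)) = (\<lambda>t. (1/2) *\<^sub>R vm t + (1 - 1/2) *\<^sub>R w t)"
      unfolding vp_def vm_def w_def by (simp add: fun_eq_iff prod_eq_iff algebra_simps)
    have A1: "AE z in lborel. z \<in> {0<..<T} \<times> \<omega> \<longrightarrow> S vp z + S vm z = 2 * S ubar z"
      using S_affine[OF vpL2 vmL2, of "1/2"] unfolding e1 by eventually_elim simp
    have A2: "AE z in lborel. z \<in> {0<..<T} \<times> \<omega> \<longrightarrow> S vp z - S vm z = S w z - S (\<lambda>t. 0) z"
      using S_affine[OF vpL2 zL2, of "1/2"] S_affine[OF vmL2 wL2, of "1/2"] unfolding e2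
      by eventually_elim (auto simp: field_simps)
    have Osum: "obs_nsq T \<omega> (\<lambda>z. S vp z - yd z) + obs_nsq T \<omega> (\<lambda>z. S vm z - yd z)
       - 2 * obs_nsq T \<omega> (\<lambda>z. S ubar z - yd z) = 1/2 * obs_nsq T \<omega> (lin_part S w)"
      unfolding lin_part_def
      by (rule obs_combo[OF S_maps[OF vpL2] S_maps[OF vmL2] S_maps[OF uL2] S_maps[OF wL2] S_maps[OF zL2] yd A1 A2])
    have Ob: "obs_nsq T \<omega> (lin_part S w) \<le> (op_norm T \<omega> (lin_part S))^2 * (4 * s^2 * L)"
      using op_norm_bound[OF S_bounded wL2] wn s0 L by simp
    let ?O = "obs_nsq T \<omega> (lin_part S w)"
    let ?op = "op_norm T \<omega> (lin_part S)"
    have sum: "J_beta T \<omega> S yd \<alpha> \<epsilon> \<beta> vp + J_beta T \<omega> S yd \<alpha> \<epsilon> \<beta> vm - 2 * J_beta T \<omega> S yd \<alpha> \<epsilon> \<beta> ubar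
       = 1/4 * ?O + \<alpha> * (s^2 * L) + \<epsilon> * s^2 * (pi^2 / L) - \<beta> * (s^2 * L)"
    proof -
      have "J_beta T \<omega> S yd \<alpha> \<epsilon> \<beta> vp + J_beta T \<omega> S yd \<alpha> \<epsilon> \<beta> vm - 2 * J_beta T \<omega> S yd \<alpha> \<epsilon> \<beta> ubar
        = 1/2 * (obs_nsq T \<omega> (\<lambda>z. S vp z - yd z) + obs_nsq T \<omega> (\<lambda>z. S vm z - yd z)
             - 2 * obs_nsq T \<omega> (\<lambda>z. S ubar z - yd z))
          + \<alpha>/2 * (ctrl_nsq T vp + ctrl_nsq T vm - 2 * ctrl_nsq T ubar)
          + \<epsilon>/2 * (ctrl_nsq T (dt T vp) + ctrl_nsq T (dt T vm) - 2 * ctrl_nsq T (dt T ubar))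
          + \<beta> * ((LINT t:{0..T}|lborel. \<bar>fst (vp t) * snd (vp t)\<bar>) + (LINT t:{0..T}|lborel. \<bar>fst (vm t) * snd (vm t)\<bar>)
             - 2 * (LINT t:{0..T}|lborel. \<bar>fst (ubar t) * snd (ubar t)\<bar>))"
        unfolding J_beta_def by (simp add: algebra_simps)
      also have "\<dots> = 1/4 * ?O + \<alpha> * (s^2 * L) + \<epsilon> * s^2 * (pi^2 / L) - \<beta> * (s^2 * L)"
      proof -
        have Cs: "ctrl_nsq T vp + ctrl_nsq T vm - 2 * ctrl_nsq T ubar = 2 * s^2 * L" using Csum by simp
        have Ds: "ctrl_nsq T (dt T vp) + ctrl_nsq T (dt T vm) - 2 * ctrl_nsq T (dt T ubar) = 2 * s^2 * (pi^2 / L)"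
          using Dsum by simp
        have Bs: "(LINT t:{0..T}|lborel. \<bar>fst (vp t) * snd (vp t)\<bar>) + (LINT t:{0..T}|lborel. \<bar>fst (vm t) * snd (vm t)\<bar>)
             - 2 * (LINT t:{0..T}|lborel. \<bar>fst (ubar t) * snd (ubar t)\<bar>) = - (s^2 * L)" using Bsum by simp
        show ?thesis unfolding Osum Cs Ds Bs by (simp add: algebra_simps)
      qed
      finally show ?thesis .
    qed
    have X: "s^2 * L > 0" using s0 L by simp
    have epi: "\<epsilon> * s^2 * (pi^2 / L) = pi^2 * (s^2 * L)"
      using L unfolding L2[symmetric] by (simp add: power2_eq_square field_simps)
    have "1/4 * ?O \<le> ?op^2 * (s^2 * L)" using Ob by simp
    moreover have "(?op^2 + \<alpha> + pi^2 - \<beta>) * (s^2 * L) < 0"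
      using \<beta> X by (intro mult_neg_pos) auto
    ultimately have "J_beta T \<omega> S yd \<alpha> \<epsilon> \<beta> vp + J_beta T \<omega> S yd \<alpha> \<epsilon> \<beta> vm - 2 * J_beta T \<omega> S yd \<alpha> \<epsilon> \<beta> ubar < 0"
      unfolding sum epi by (simp add: algebra_simps)
    then show False using Jp Jm by simp
  qed
qed


end
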